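(* Let $(V_{cl}, V_{op}, m_{cl-op})$ be an open-closed field algebra and let $\mathbb{Y}_{cl-op}(u; z, \bar{z})v := m_{cl-op}^{(1;1)}(u;v;z,\bar{z};0)$ for $u\in V_{cl}$, $v\in V_{op}$, $z\in \mathbb{H}$. Then for $u\in V_{cl}$, \begin{eqnarray*} [\mathbf{d}_{op}, \mathbb{Y}_{cl-op}(u; z, \bar{z})] &=& \mathbb{Y}_{cl-op}((\mathbf{d}_{cl}^L + \mathbf{d}_{cl}^R)u; z, \bar{z}) + \left( z\frac{\partial}{\partial z} + \bar{z} \frac{\partial}{\partial \bar{z}} \right) \mathbb{Y}_{cl-op}(u; z, \bar{z}). \end{eqnarray*}
   Context: An open-closed field algebra consists of an $\mathbb{R}\times\mathbb{R}$-graded full field algebra $(V_{cl}, m_{cl}, \mathbf{d}_{cl}^L, \mathbf{d}_{cl}^R, D_{cl}^L, D_{cl}^R)$ (with left/right grading operators $\mathbf{d}_{cl}^L,\mathbf{d}_{cl}^R$), an $\mathbb{R}$-graded vector space $V_{op}$ with grading operator $\mathbf{d}_{op}$ and an operator $D_{op}$, and maps $m_{cl-op}^{(l;n)}: V_{cl}^{\otimes l}\otimes V_{op}^{\otimes n}\times M_{\mathbb{H}}^l\times\Lambda^n\to\overline{V}_{op}$ (with $M_{\mathbb{H}}^l$ the configuration space of $l$ distinct points in the upper half plane $\mathbb{H}$ and $\Lambda^n=\{r_1>\dots>r_n\geq 0\}$), linear in the vector arguments and smooth in the positions, satisfying identity, convergence, permutation, $D_{op}$ and the following grading property: for $a\in\mathbb{R}$,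 $e^{a\mathbf{d}_{op}} m_{cl-op}^{(l;n)}(u_1,\dots,u_l;v_1,\dots,v_n;z_1,\bar z_1,\dots,z_l,\bar z_l;r_1,\dots,r_n) = m_{cl-op}^{(l;n)}(e^{a(\mathbf{d}_{cl}^L+\mathbf{d}_{cl}^R)}u_1,\dots,e^{a(\mathbf{d}_{cl}^L+\mathbf{d}_{cl}^R)}u_l; e^{a\mathbf{d}_{op}}v_1,\dots,e^{a\mathbf{d}_{op}}v_n; e^az_1,e^a\bar z_1,\dots,e^az_l,e^a\bar z_l; e^ar_1,\dots,e^ar_n)$. *)

theory Defs
  imports "HOL-Analysis.Analysis"
begin

text \<open>A graded space with index set 'i (R for V_op, R x R for V_cl) is given by
  its homogeneous subspaces W i.  The graded space itself is the direct sum, realised as the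
  finitely supported families of homogeneous components; its algebraic completion is the
  direct product (all families).\<close>

definition graded_space :: "('i \<Rightarrow> 'v::zero set) \<Rightarrow> ('i \<Rightarrow> 'v) set" where
  "graded_space W = {w. finite {i. w i \<noteq> 0} \<and> (\<forall>i. w i \<in> W i)}"

definition graded_completion :: "('i \<Rightarrow> 'v set) \<Rightarrow> ('i \<Rightarrow> 'v) set" where
  "graded_completion W = {w. \<forall>i. w i \<in> W i}"

definition fam_add :: "('i \<Rightarrow> 'v::plus) \<Rightarrow> ('i \<Rightarrow> 'v) \<Rightarrow> ('i \<Rightarrow> 'v)" where
  "fam_add w1 w2 = (\<lambda>i. w1 i + w2 i)"

definition fam_scale :: "(complex \<Rightarrow> 'v \<Rightarrow> 'v) \<Rightarrow> complex \<Rightarrow> ('i \<Rightarrow> 'v) \<Rightarrow> ('i \<Rightarrow> 'v)" where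
  "fam_scale sc c w = (\<lambda>i. sc c (w i))"

definition fam_diff :: "('i \<Rightarrow> 'v::minus) \<Rightarrow> ('i \<Rightarrow> 'v) \<Rightarrow> ('i \<Rightarrow> 'v)" where
  "fam_diff w1 w2 = (\<lambda>i. w1 i - w2 i)"

definition d_op :: "(complex \<Rightarrow> 'v \<Rightarrow> 'v) \<Rightarrow> (real \<Rightarrow> 'v) \<Rightarrow> (real \<Rightarrow> 'v)" where
  "d_op sc w = (\<lambda>n. sc (complex_of_real n) (w n))"

definition d_cl_LR :: "(complex \<Rightarrow> 'v \<Rightarrow> 'v) \<Rightarrow> (real \<times> real \<Rightarrow> 'v) \<Rightarrow> (real \<times> real \<Rightarrow> 'v)" where
  "d_cl_LR sc u = (\<lambda>(p, q). sc (complex_of_real (p + q)) (u (p, q)))"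

definition exp_d_op :: "(complex \<Rightarrow> 'v \<Rightarrow> 'v) \<Rightarrow> real \<Rightarrow> (real \<Rightarrow> 'v) \<Rightarrow> (real \<Rightarrow> 'v)" where
  "exp_d_op sc a w = (\<lambda>n. sc (complex_of_real (exp (a * n))) (w n))"

definition exp_d_cl_LR :: "(complex \<Rightarrow> 'v \<Rightarrow> 'v) \<Rightarrow> real \<Rightarrow> (real \<times> real \<Rightarrow> 'v) \<Rightarrow> (real \<times> real \<Rightarrow> 'v)" where
  "exp_d_cl_LR sc a u = (\<lambda>(p, q). sc (complex_of_real (exp (a * (p + q)))) (u (p, q)))"

fun C_k_on :: "nat \<Rightarrow> 'a::euclidean_space set \<Rightarrow> ('a \<Rightarrow> 'b::real_normed_vector) \<Rightarrow> bool" where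
  "C_k_on 0 S f = continuous_on S f"
| "C_k_on (Suc k) S f =
     (\<exists>D. (\<forall>x\<in>S. (f has_derivative D x) (at x within S)) \<and>
          (\<forall>b\<in>Basis. C_k_on k S (\<lambda>x. D x b)))"

definition smooth_on :: "'a::euclidean_space set \<Rightarrow> ('a \<Rightarrow> 'b::real_normed_vector) \<Rightarrow> bool" where
  "smooth_on S f = (\<forall>k. C_k_on k S f)"

definition upper_half_plane :: "complex set" where
  "upper_half_plane = {z. 0 < Im z}"

definition pos_11 :: "(complex \<times> real) set" where
  "pos_11 = upper_half_plane \<times> {0..}"

text \<open>m11 u v z r stands for m_cl-op^(1;1)(u; v; z, conj z; r), with values in the completion
  of V_op.\<close>

definition oc_field_algebra_11 ::
  "(complex \<Rightarrow> 'c::ab_group_add \<Rightarrow> 'c) \<Rightarrow> (real \<times> real \<Rightarrow> 'c set) \<Rightarrow>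
   (complex \<Rightarrow> 'o::ab_group_add \<Rightarrow> 'o) \<Rightarrow> (real \<Rightarrow> 'o set) \<Rightarrow>
   ((real \<times> real \<Rightarrow> 'c) \<Rightarrow> (real \<Rightarrow> 'o) \<Rightarrow> complex \<Rightarrow> real \<Rightarrow> (real \<Rightarrow> 'o)) \<Rightarrow> bool" where
  "oc_field_algebra_11 sc_cl Wcl sc_op Wop m11 \<longleftrightarrow>
     vector_space sc_cl \<and> vector_space sc_op \<and>
     (\<forall>k. module.subspace sc_cl (Wcl k)) \<and> (\<forall>n. module.subspace sc_op (Wop n)) \<and>
     \<comment> \<open>values lie in the algebraic completion\<close>
     (\<forall>u v z r. u \<in> graded_space Wcl \<longrightarrow> v \<in> graded_space Wop \<longrightarrow> (z, r) \<in> pos_11 \<longrightarrow>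
        m11 u v z r \<in> graded_completion Wop) \<and>
     \<comment> \<open>linearity in the closed-string argument\<close>
     (\<forall>u1 u2 v z r. u1 \<in> graded_space Wcl \<longrightarrow> u2 \<in> graded_space Wcl \<longrightarrow>
        v \<in> graded_space Wop \<longrightarrow> (z, r) \<in> pos_11 \<longrightarrow>
        m11 (fam_add u1 u2) v z r = fam_add (m11 u1 v z r) (m11 u2 v z r)) \<and>
     (\<forall>c u v z r. u \<in> graded_space Wcl \<longrightarrow> v \<in> graded_space Wop \<longrightarrow> (z, r) \<in> pos_11 \<longrightarrow>
        m11 (fam_scale sc_cl c u) v z r = fam_scale sc_op c (m11 u v z r)) \<and>
     \<comment> \<open>linearity in the open-string argument\<close>
     (\<forall>u v1 v2 z r. u \<in> graded_space Wcl \<longrightarrow> v1 \<in> graded_space Wop \<longrightarrow>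
        v2 \<in> graded_space Wop \<longrightarrow> (z, r) \<in> pos_11 \<longrightarrow>
        m11 u (fam_add v1 v2) z r = fam_add (m11 u v1 z r) (m11 u v2 z r)) \<and>
     (\<forall>c u v z r. u \<in> graded_space Wcl \<longrightarrow> v \<in> graded_space Wop \<longrightarrow> (z, r) \<in> pos_11 \<longrightarrow>
        m11 u (fam_scale sc_op c v) z r = fam_scale sc_op c (m11 u v z r)) \<and>
     \<comment> \<open>smoothness in the positions\<close>
     (\<forall>u v n (\<phi>::'o \<Rightarrow> complex). u \<in> graded_space Wcl \<longrightarrow> v \<in> graded_space Wop \<longrightarrow>
        Vector_Spaces.linear sc_op (*) \<phi> \<longrightarrow>
        smooth_on pos_11 (\<lambda>(z, r). \<phi> (m11 u v z r n))) \<and>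
     \<comment> \<open>grading property\<close>
     (\<forall>a u v z r. u \<in> graded_space Wcl \<longrightarrow> v \<in> graded_space Wop \<longrightarrow> (z, r) \<in> pos_11 \<longrightarrow>
        exp_d_op sc_op a (m11 u v z r) =
        m11 (exp_d_cl_LR sc_cl a u) (exp_d_op sc_op a v) (complex_of_real (exp a) * z) (exp a * r))"

end

theory Submission
  imports Defs
begin

definition single :: "'i \<Rightarrow> 'v::zero \<Rightarrow> 'i \<Rightarrow> 'v" where
  "single k x = (\<lambda>i. if i = k then x else 0)"
definition Sgen :: "(complex \<Rightarrow> 'v \<Rightarrow> 'v) \<Rightarrow> ('i \<Rightarrow> complex) \<Rightarrow> ('i \<Rightarrow> 'v) \<Rightarrow> ('i \<Rightarrow> 'v)" where
  "Sgen sc c u = (\<lambda>i. sc (c i) (u i))"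

lemma single_graded:
  assumes vs: "vector_space sc" and W: "\<forall>k. module.subspace sc (W k)"
  and u: "u \<in> graded_space W"
  shows "single k (u k) \<in> graded_space W"
proof -
  interpret vector_space sc by fact
  have "{i. single k (u k) i \<noteq> 0} \<subseteq> {k}" by (auto simp: single_def)
  hence "finite {i. single k (u k) i \<noteq> 0}" using finite_subset by blast
  moreover have "single k (u k) i \<in> W i" for i
    using u W subspace_0 by (auto simp: single_def graded_space_def)
  ultimately show ?thesis by (simp add: graded_space_def)
qed

lemma Sgen_graded:
  assumes vs: "vector_space sc" and W: "\<forall>k. module.subspace sc (W k)"
  and u: "u \<in> graded_space W"
  shows "Sgen sc c u \<in> graded_space W" "{i. Sgen sc c u i \<noteq> 0} \<subseteq> {i. u i \<noteq> 0}"
proof -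
  interpret vector_space sc by fact
  show sub: "{i. Sgen sc c u i \<noteq> 0} \<subseteq> {i. u i \<noteq> 0}" by (auto simp: Sgen_def)
  have "finite {i. u i \<noteq> 0}" using u by (simp add: graded_space_def)
  hence "finite {i. Sgen sc c u i \<noteq> 0}" using finite_subset sub by blast
  moreover have "Sgen sc c u i \<in> W i" for i
    using u W subspace_scale by (auto simp: Sgen_def graded_space_def)
  ultimately show "Sgen sc c u \<in> graded_space W" by (simp add: graded_space_def)
qed

lemma decomp:
  assumes vs: "vector_space sc" and W: "\<forall>k. module.subspace sc (W k)"
  and add: "\<forall>x y. x \<in> graded_space W \<longrightarrow> y \<in> graded_space W \<longrightarrow> f (fam_add x y) = f x + (f y :: complex)"
  and fin: "finite S"
  shows "u \<in> graded_space W \<Longrightarrow> {i. u i \<noteq> 0} \<subseteq> S \<Longrightarrow> f u = (\<Sum>k\<in>S. f (single k (u k)))"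
  using fin
proof (induction S arbitrary: u rule: finite_induct)
  case empty
  interpret vector_space sc by fact
  have z: "(\<lambda>_. 0) \<in> graded_space W" using W subspace_0 by (simp add: graded_space_def)
  have "f (fam_add (\<lambda>_. 0) (\<lambda>_. 0)) = f (\<lambda>_. 0) + f (\<lambda>_. 0)" using add z by blast
  hence "f (\<lambda>_. 0) = 0" by (simp add: fam_add_def)
  moreover have "u = (\<lambda>_. 0)" using empty by auto
  ultimately show ?case by simp
next
  case (insert k S)
  interpret vector_space sc by fact
  define r where "r = u(k := 0)"
  have rg: "r \<in> graded_space W" using insert.prems W subspace_0
    unfolding r_def graded_space_def
    by (auto intro: finite_subset[of _ "{i. u i \<noteq> 0}"])
  have sg: "single k (u k) \<in> graded_space W" using single_graded[OF vs W insert.prems(1)] .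
  have ue: "u = fam_add (single k (u k)) r" by (auto simp: fam_add_def single_def r_def)
  have rs: "{i. r i \<noteq> 0} \<subseteq> S" using insert.prems by (auto simp: r_def)
  have "f u = f (single k (u k)) + f r" using add ue rg sg by metis
  also have "f r = (\<Sum>j\<in>S. f (single j (r j)))" using insert.IH rg rs by blast
  also have "\<dots> = (\<Sum>j\<in>S. f (single j (u j)))"
    using insert.hyps by (intro sum.cong) (auto simp: r_def)
  finally show ?case using insert.hyps by simp
qed

lemma Sgen_repr:
  assumes vs: "vector_space sc" and W: "\<forall>k. module.subspace sc (W k)"
  and add: "\<forall>x y. x \<in> graded_space W \<longrightarrow> y \<in> graded_space W \<longrightarrow> f (fam_add x y) = f x + (f y :: complex)"
  and hom: "\<forall>c x. x \<in> graded_space W \<longrightarrow> f (fam_scale sc c x) = c * f x"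
  and u: "u \<in> graded_space W"
  shows "f (Sgen sc c u) = (\<Sum>k\<in>{i. u i \<noteq> 0}. c k * f (single k (u k)))"
proof -
  interpret vector_space sc by fact
  have fin: "finite {i. u i \<noteq> 0}" using u by (simp add: graded_space_def)
  have "f (Sgen sc c u) = (\<Sum>k\<in>{i. u i \<noteq> 0}. f (single k (Sgen sc c u k)))"
    using decomp[OF vs W add fin Sgen_graded[OF vs W u]] by blast
  also have "\<dots> = (\<Sum>k\<in>{i. u i \<noteq> 0}. c k * f (single k (u k)))"
  proof (rule sum.cong)
    fix k
    have "single k (Sgen sc c u k) = fam_scale sc (c k) (single k (u k))"
      by (auto simp: single_def Sgen_def fam_scale_def)
    thus "f (single k (Sgen sc c u k)) = c k * f (single k (u k))"
      using hom single_graded[OF vs W u] by simp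
  qed simp
  finally show ?thesis .
qed


theorem proposition1p11:
  fixes sc_cl :: "complex \<Rightarrow> 'c::ab_group_add \<Rightarrow> 'c"
    and Wcl :: "real \<times> real \<Rightarrow> 'c set"
    and sc_op :: "complex \<Rightarrow> 'o::ab_group_add \<Rightarrow> 'o"
    and Wop :: "real \<Rightarrow> 'o set"
    and m11 :: "(real \<times> real \<Rightarrow> 'c) \<Rightarrow> (real \<Rightarrow> 'o) \<Rightarrow> complex \<Rightarrow> real \<Rightarrow> (real \<Rightarrow> 'o)"
    and Y :: "(real \<times> real \<Rightarrow> 'c) \<Rightarrow> complex \<Rightarrow> (real \<Rightarrow> 'o) \<Rightarrow> (real \<Rightarrow> 'o)"
  assumes alg: "oc_field_algebra_11 sc_cl Wcl sc_op Wop m11"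
    and Y_def: "\<And>u z v. Y u z v = m11 u v z 0"
    and u: "u \<in> graded_space Wcl"
    and v: "v \<in> graded_space Wop"
    and z: "z \<in> upper_half_plane"
    and phi: "Vector_Spaces.linear sc_op (*) (\<phi> :: 'o \<Rightarrow> complex)"
  shows "\<phi> (fam_diff (d_op sc_op (Y u z v)) (Y u z (d_op sc_op v)) n) =
           \<phi> (Y (d_cl_LR sc_cl u) z v n)
           + frechet_derivative (\<lambda>w. \<phi> (Y u w v n)) (at z) z"
proof -
  note A = alg[unfolded oc_field_algebra_11_def]
  have vcl: "vector_space sc_cl" and vop: "vector_space sc_op"
    and Wc: "\<forall>k. module.subspace sc_cl (Wcl k)" and Wo: "\<forall>k. module.subspace sc_op (Wop k)"
    using A by auto
  have addu0: "\<forall>u1 u2 v z r. u1 \<in> graded_space Wcl \<longrightarrow> u2 \<in> graded_space Wcl \<longrightarrow>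
        v \<in> graded_space Wop \<longrightarrow> (z, r) \<in> pos_11 \<longrightarrow>
        m11 (fam_add u1 u2) v z r = fam_add (m11 u1 v z r) (m11 u2 v z r)"
   and scu0: "\<forall>c u v z r. u \<in> graded_space Wcl \<longrightarrow> v \<in> graded_space Wop \<longrightarrow> (z, r) \<in> pos_11 \<longrightarrow>
        m11 (fam_scale sc_cl c u) v z r = fam_scale sc_op c (m11 u v z r)"
   and addv0: "\<forall>u v1 v2 z r. u \<in> graded_space Wcl \<longrightarrow> v1 \<in> graded_space Wop \<longrightarrow>
        v2 \<in> graded_space Wop \<longrightarrow> (z, r) \<in> pos_11 \<longrightarrow>
        m11 u (fam_add v1 v2) z r = fam_add (m11 u v1 z r) (m11 u v2 z r)"
   and scv0: "\<forall>c u v z r. u \<in> graded_space Wcl \<longrightarrow> v \<in> graded_space Wop \<longrightarrow> (z, r) \<in> pos_11 \<longrightarrow>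
        m11 u (fam_scale sc_op c v) z r = fam_scale sc_op c (m11 u v z r)"
   and smooth0: "\<forall>u v n (\<phi>::'o \<Rightarrow> complex). u \<in> graded_space Wcl \<longrightarrow> v \<in> graded_space Wop \<longrightarrow>
        Vector_Spaces.linear sc_op (*) \<phi> \<longrightarrow>
        smooth_on pos_11 (\<lambda>(z, r). \<phi> (m11 u v z r n))"
   and grad0: "\<forall>a u v z r. u \<in> graded_space Wcl \<longrightarrow> v \<in> graded_space Wop \<longrightarrow> (z, r) \<in> pos_11 \<longrightarrow>
        exp_d_op sc_op a (m11 u v z r) =
        m11 (exp_d_cl_LR sc_cl a u) (exp_d_op sc_op a v) (complex_of_real (exp a) * z) (exp a * r)"
    using A apply -
    apply (elim conjE, assumption)+
    done
  note addu = addu0[rule_format] and scu = scu0[rule_format] and addv = addv0[rule_format]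
    and scv = scv0[rule_format] and grad = grad0[rule_format]
  have smooth: "smooth_on pos_11 (\<lambda>(z, r). \<phi> (m11 u v z r n))"
    using smooth0 u v phi by blast
  have phadd: "\<phi> (x + y) = \<phi> x + \<phi> y" for x y using phi by (simp add: Vector_Spaces.linear_iff)
  have phsc: "\<phi> (sc_op c x) = c * \<phi> x" for c x using phi by (simp add: Vector_Spaces.linear_iff)
  have phdiff: "\<phi> (x - y) = \<phi> x - \<phi> y" for x y
    using phadd[of "x - y" y] by simp
  have zp: "(z, 0) \<in> pos_11" using z by (simp add: pos_11_def)
  define \<Phi> where "\<Phi> x y = \<phi> (m11 x y z 0 n)" for x y
  define S where "S = {k. u k \<noteq> 0}"
  define T where "T = {j. v j \<noteq> 0}"
  define AA where "AA k j = \<Phi> (single k (u k)) (single j (v j))" for k j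
  have bil: "\<Phi> (Sgen sc_cl c1 u) (Sgen sc_op c2 v) = (\<Sum>k\<in>S. \<Sum>j\<in>T. c1 k * c2 j * AA k j)"
    for c1 c2
  proof -
    have vg: "Sgen sc_op c2 v \<in> graded_space Wop" using Sgen_graded[OF vop Wo v] by blast
    have "\<Phi> (Sgen sc_cl c1 u) (Sgen sc_op c2 v) = (\<Sum>k\<in>S. c1 k * \<Phi> (single k (u k)) (Sgen sc_op c2 v))"
      unfolding S_def
      by (rule Sgen_repr[OF vcl Wc _ _ u, where f = "\<lambda>x. \<Phi> x (Sgen sc_op c2 v)"])
        (simp_all add: \<Phi>_def addu[OF _ _ vg zp] scu[OF _ vg zp], simp_all add: fam_add_def fam_scale_def phadd phsc)
    also have "\<dots> = (\<Sum>k\<in>S. c1 k * (\<Sum>j\<in>T. c2 j * AA k j))"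
    proof (rule sum.cong[OF refl])
      fix k
      have ug: "single k (u k) \<in> graded_space Wcl" using single_graded[OF vcl Wc u] .
      have "\<Phi> (single k (u k)) (Sgen sc_op c2 v) = (\<Sum>j\<in>T. c2 j * AA k j)"
        unfolding T_def AA_def
        by (rule Sgen_repr[OF vop Wo _ _ v, where f = "\<lambda>y. \<Phi> (single k (u k)) y"])
          (simp_all add: \<Phi>_def addv[OF ug _ _ zp] scv[OF ug _ zp], simp_all add: fam_add_def fam_scale_def phadd phsc)
      thus "c1 k * \<Phi> (single k (u k)) (Sgen sc_op c2 v) = c1 k * (\<Sum>j\<in>T. c2 j * AA k j)" by simp
    qed
    finally show ?thesis by (simp add: sum_distrib_left mult.assoc)
  qed
  interpret vc: vector_space sc_cl by (rule vcl)
  interpret vo: vector_space sc_op by (rule vop)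
  define wc :: "real \<times> real \<Rightarrow> real" where "wc k = fst k + snd k" for k
  have Ecl: "exp_d_cl_LR sc_cl a x = Sgen sc_cl (\<lambda>k. of_real (exp (a * wc k))) x" for a x
    by (rule ext) (simp add: exp_d_cl_LR_def Sgen_def wc_def case_prod_beta)
  have Eop: "exp_d_op sc_op a y = Sgen sc_op (\<lambda>j. of_real (exp (a * j))) y" for a y
    by (rule ext) (simp add: exp_d_op_def Sgen_def)
  have dcl: "d_cl_LR sc_cl x = Sgen sc_cl (\<lambda>k. of_real (wc k)) x" for x
    by (rule ext) (simp add: d_cl_LR_def Sgen_def wc_def case_prod_beta)
  have dop: "d_op sc_op y = Sgen sc_op (\<lambda>j. of_real j) y" for y
    by (rule ext) (simp add: d_op_def Sgen_def)
  have u1: "u = Sgen sc_cl (\<lambda>_. 1) u" by (rule ext) (simp add: Sgen_def)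
  have v1: "v = Sgen sc_op (\<lambda>_. 1) v" by (rule ext) (simp add: Sgen_def)
  define h where "h w = \<phi> (m11 u v w 0 n)" for w
  define R where "R a = (\<Sum>k\<in>S. \<Sum>j\<in>T. exp (a * (n - wc k - j)) *\<^sub>R AA k j)" for a
  define R' where "R' = (\<Sum>k\<in>S. \<Sum>j\<in>T. (n - wc k - j) *\<^sub>R AA k j)"
  have gR: "h (exp a *\<^sub>R z) = R a" for a
  proof -
    define u' where "u' = exp_d_cl_LR sc_cl (-a) u"
    define v' where "v' = exp_d_op sc_op (-a) v"
    have u'g: "u' \<in> graded_space Wcl" unfolding u'_def Ecl using Sgen_graded[OF vcl Wc u] by blast
    have v'g: "v' \<in> graded_space Wop" unfolding v'_def Eop using Sgen_graded[OF vop Wo v] by blast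
    have iu: "exp_d_cl_LR sc_cl a u' = u"
      by (rule ext) (simp add: u'_def exp_d_cl_LR_def case_prod_beta exp_minus_inverse flip: of_real_mult)
    have iv: "exp_d_op sc_op a v' = v"
      by (rule ext) (simp add: v'_def exp_d_op_def exp_minus_inverse flip: of_real_mult)
    have "exp_d_op sc_op a (m11 u' v' z 0) n = m11 u v (complex_of_real (exp a) * z) 0 n"
      using grad[OF u'g v'g zp, of a] iu iv by simp
    hence "of_real (exp (a * n)) * \<Phi> u' v' = h (exp a *\<^sub>R z)"
      by (simp add: exp_d_op_def h_def \<Phi>_def phsc[symmetric] scaleR_conv_of_real)
    moreover have "\<Phi> u' v' = (\<Sum>k\<in>S. \<Sum>j\<in>T. of_real (exp (-a * wc k)) * of_real (exp (-a * j)) * AA k j)"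
      unfolding u'_def v'_def Ecl Eop bil ..
    ultimately have "h (exp a *\<^sub>R z) = (\<Sum>k\<in>S. \<Sum>j\<in>T. of_real (exp (a * n)) * (of_real (exp (-a * wc k)) * of_real (exp (-a * j)) * AA k j))"
      by (simp add: sum_distrib_left)
    also have "\<dots> = R a" unfolding R_def
    proof (intro sum.cong refl)
      fix k j
      have "exp (a * n) * (exp (-a * wc k) * exp (-a * j)) = exp (a * (n - wc k - j))"
        by (simp add: mult_exp_exp algebra_simps)
      thus "of_real (exp (a * n)) * (of_real (exp (-a * wc k)) * of_real (exp (-a * j)) * AA k j) =
            exp (a * (n - wc k - j)) *\<^sub>R AA k j"
        by (simp add: scaleR_conv_of_real flip: of_real_mult)
    qed
    finally show ?thesis .
  qed
  have Rd: "(R has_vector_derivative R') (at 0)"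
    unfolding R_def R'_def
    by (intro derivative_eq_intros) auto
  define G where "G = (\<lambda>(w::complex, r::real). \<phi> (m11 u v w r n))"
  have "C_k_on (Suc 0) pos_11 G" using smooth unfolding smooth_on_def G_def by blast
  then obtain DD where DD: "\<forall>x\<in>pos_11. (G has_derivative DD x) (at x within pos_11)"
    by auto
  have hG: "h = G \<circ> (\<lambda>w. (w, 0))" by (rule ext) (simp add: h_def G_def)
  have opH: "open upper_half_plane"
    unfolding upper_half_plane_def using open_halfspace_Im_gt[of 0] by simp
  have inner: "((\<lambda>w. (w, 0::real)) has_derivative (\<lambda>t. (t, 0))) (at z within upper_half_plane)"
    by (intro derivative_eq_intros) auto
  have "(G has_derivative DD (z, 0)) (at (z, 0) within (\<lambda>w. (w, 0::real)) ` upper_half_plane)"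
    by (rule has_derivative_subset[OF DD[rule_format, OF zp]]) (auto simp: pos_11_def)
  from diff_chain_within[OF inner this]
  have "(h has_derivative (DD (z, 0) \<circ> (\<lambda>t. (t, 0)))) (at z)"
    unfolding hG using at_within_open[OF z opH] by simp
  then obtain D where hD: "(h has_derivative D) (at z)" by blast
  have fd: "frechet_derivative (\<lambda>w. \<phi> (Y u w v n)) (at z) = D"
    using frechet_derivative_at[OF hD] unfolding h_def Y_def by simp
  have inner2: "((\<lambda>a::real. exp a *\<^sub>R z) has_derivative (\<lambda>t. t *\<^sub>R z)) (at 0)"
    by (intro derivative_eq_intros) auto
  have "((h \<circ> (\<lambda>a::real. exp a *\<^sub>R z)) has_derivative (D \<circ> (\<lambda>t. t *\<^sub>R z))) (at 0)"
    by (rule diff_chain_at[OF inner2]) (simp add: hD)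
  moreover have "D \<circ> (\<lambda>t. t *\<^sub>R z) = (\<lambda>t. t *\<^sub>R D z)"
    using has_derivative_bounded_linear[OF hD]
    by (auto simp: fun_eq_iff linear_simps)
  moreover have "h \<circ> (\<lambda>a::real. exp a *\<^sub>R z) = R" using gR by (simp add: fun_eq_iff)
  ultimately have "(R has_vector_derivative D z) (at 0)"
    by (simp add: has_vector_derivative_def)
  with Rd have DzR: "D z = R'" using vector_derivative_unique_at by blast
  have lhs: "\<phi> (fam_diff (d_op sc_op (Y u z v)) (Y u z (d_op sc_op v)) n) =
     of_real n * \<Phi> u v - \<Phi> u (d_op sc_op v)"
    by (simp add: fam_diff_def d_op_def Y_def phdiff phsc \<Phi>_def)
  have "\<Phi> u v = (\<Sum>k\<in>S. \<Sum>j\<in>T. AA k j)" using bil[of "\<lambda>_. 1" "\<lambda>_. 1"] u1 v1 by simp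
  moreover have "\<Phi> u (d_op sc_op v) = (\<Sum>k\<in>S. \<Sum>j\<in>T. of_real j * AA k j)"
    using bil[of "\<lambda>_. 1" "\<lambda>j. of_real j"] u1 dop by simp
  moreover have "\<Phi> (d_cl_LR sc_cl u) v = (\<Sum>k\<in>S. \<Sum>j\<in>T. of_real (wc k) * AA k j)"
    using bil[of "\<lambda>k. of_real (wc k)" "\<lambda>_. 1"] v1 dcl by simp
  ultimately have "of_real n * \<Phi> u v - \<Phi> u (d_op sc_op v) = \<Phi> (d_cl_LR sc_cl u) v + R'"
    unfolding R'_def
    by (simp add: sum_distrib_left scaleR_conv_of_real flip: sum_subtractf sum.distrib)
      (simp add: algebra_simps)
  thus ?thesis using lhs fd DzR by (simp add: \<Phi>_def Y_def)



qed

end
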